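(* Let $\omega\in\mathbb{R}$. Then there exists a sequence $\{\varphi_n\}_{n\in\mathbb{N}}\subseteq W(\mathbb{R}^+)$ with $\varphi_n(0)=0$ for all $n$ such that $\lim_{n\to\infty}\|\varphi_n\|^2_{L^2(\mathbb{R}^+)}=4d_{\mathbb{R}^+}(\omega)$ and $\lim_{n\to\infty}I_{\mathbb{R}^+}(\varphi_n,\omega)=0$.
   Context: $W(\mathbb{R}^+)=\{v\in H^1(\mathbb{R}^+;\mathbb{C}):|v|^2\log|v|^2\in L^1(\mathbb{R}^+)\}$. $S_{\mathbb{R}^+}(v,\omega)=\frac12\|\partial_xv\|^2_{L^2(\mathbb{R}^+)}+\frac{\omega+1}2\|v\|^2_{L^2(\mathbb{R}^+)}-\frac12\int_0^\infty|v|^2\log|v|^2dx$, $I_{\mathbb{R}^+}(v,\omega)=\|\partial_xv\|^2_{L^2(\mathbb{R}^+)}+\omega\|v\|^2_{L^2(\mathbb{R}^+)}-\int_0^\infty|v|^2\log|v|^2dx$, and $d_{\mathbb{R}^+}(\omega)=\inf\{S_{\mathbb{R}^+}(v,\omega):v\in W(\mathbb{R}^+)\setminus\{0\},I_{\mathbb{R}^+}(v,\omega)=0\}$. *)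

theory Defs
  imports "HOL-Analysis.Analysis"
begin

text \<open>H^1 on the half line R^+ = (0,oo), complex valued, via the absolutely continuous
representative: v is square integrable on (0,oo), and g is an L^2 function with
v x = v 0 + int_0^x g for all x >= 0 (so g is the weak derivative of v and v 0 is the trace).\<close>

definition H1_deriv_halfline :: "(real \<Rightarrow> complex) \<Rightarrow> (real \<Rightarrow> complex) \<Rightarrow> bool" where
  "H1_deriv_halfline v g \<longleftrightarrow>
     set_integrable lborel {0<..} (\<lambda>x. (cmod (v x))\<^sup>2) \<and>
     set_borel_measurable lborel {0<..} g \<and>
     set_integrable lborel {0<..} (\<lambda>x. (cmod (g x))\<^sup>2) \<and>
     (\<forall>x\<ge>0. set_integrable lborel {0..x} g \<and> v x = v 0 + (LINT t:{0..x}|lborel. g t))"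

definition in_W_halfline :: "(real \<Rightarrow> complex) \<Rightarrow> (real \<Rightarrow> complex) \<Rightarrow> bool" where
  "in_W_halfline v g \<longleftrightarrow> H1_deriv_halfline v g \<and>
     set_integrable lborel {0<..} (\<lambda>x. (cmod (v x))\<^sup>2 * ln ((cmod (v x))\<^sup>2))"

definition L2sq_halfline :: "(real \<Rightarrow> complex) \<Rightarrow> real" where
  "L2sq_halfline v = (LINT x:{0<..}|lborel. (cmod (v x))\<^sup>2)"

definition logterm_halfline :: "(real \<Rightarrow> complex) \<Rightarrow> real" where
  "logterm_halfline v = (LINT x:{0<..}|lborel. (cmod (v x))\<^sup>2 * ln ((cmod (v x))\<^sup>2))"

definition S_halfline :: "(real \<Rightarrow> complex) \<Rightarrow> (real \<Rightarrow> complex) \<Rightarrow> real \<Rightarrow> real" where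
  "S_halfline v g \<omega> = L2sq_halfline g / 2 + (\<omega> + 1) / 2 * L2sq_halfline v - logterm_halfline v / 2"

definition I_halfline :: "(real \<Rightarrow> complex) \<Rightarrow> (real \<Rightarrow> complex) \<Rightarrow> real \<Rightarrow> real" where
  "I_halfline v g \<omega> = L2sq_halfline g + \<omega> * L2sq_halfline v - logterm_halfline v"

definition d_halfline :: "real \<Rightarrow> real" where
  "d_halfline \<omega> = Inf {S_halfline v g \<omega> | v g. in_W_halfline v g \<and> (\<exists>x\<ge>0. v x \<noteq> 0)
                                               \<and> I_halfline v g \<omega> = 0}"

end

theory Submission
  imports Defs "HOL-Real_Asymp.Real_Asymp"
begin

lemma si_pt:
  fixes f :: "real \<Rightarrow> 'b::{banach,second_countable_topology}"
  assumes "A - {c} = B - {c}"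
  shows "set_integrable lborel A f \<longleftrightarrow> set_integrable lborel B f"
    and "(LINT x:A|lborel. f x) = (LINT x:B|lborel. f x)"
proof -
  have d: "(A - B) \<union> (B - A) \<subseteq> {c}" using assms by blast
  show "set_integrable lborel A f \<longleftrightarrow> set_integrable lborel B f"
    by (rule set_integrable_discrete_difference[OF _ d]) auto
  show "(LINT x:A|lborel. f x) = (LINT x:B|lborel. f x)"
    by (rule set_integral_discrete_difference[OF _ d]) auto
qed

lemma si_affine:
  fixes h :: "real \<Rightarrow> 'b::{banach,second_countable_topology}" and c t :: real
  assumes "set_integrable lborel S h" "\<bar>c\<bar> = 1"
  shows "set_integrable lborel {y. t + c*y \<in> S} (\<lambda>y. h (t + c*y))"
    and "(LINT y:{y. t + c*y \<in> S}|lborel. h (t + c*y)) = (LINT y:S|lborel. h y)"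
proof -
  define F where "F = (\<lambda>s. indicator S s *\<^sub>R h s)"
  have c0: "c \<noteq> 0" using assms(2) by auto
  have "has_bochner_integral lborel F (LINT y:S|lborel. h y)"
    using assms(1) unfolding F_def set_integrable_def set_lebesgue_integral_def
    by (simp add: has_bochner_integral_integrable)
  then have hb: "has_bochner_integral lborel (\<lambda>y. F (t + c*y)) (LINT y:S|lborel. h y)"
    using lborel_has_bochner_integral_real_affine_iff[OF c0, of F _ t] assms(2) by simp
  have eq: "(\<lambda>y. F (t + c*y)) = (\<lambda>y. indicator {y. t + c*y \<in> S} y *\<^sub>R h (t + c*y))"
    by (auto simp: F_def indicator_def)
  show "set_integrable lborel {y. t + c*y \<in> S} (\<lambda>y. h (t + c*y))"
    using hb unfolding eq set_integrable_def by (simp add: has_bochner_integral_iff)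
  show "(LINT y:{y. t + c*y \<in> S}|lborel. h (t + c*y)) = (LINT y:S|lborel. h y)"
    using hb unfolding eq set_lebesgue_integral_def by (simp add: has_bochner_integral_iff)
qed

definition Dbl :: "real \<Rightarrow> (real \<Rightarrow> 'b) \<Rightarrow> (real \<Rightarrow> 'b) \<Rightarrow> real \<Rightarrow> 'b" where
  "Dbl a r f x = (if x < 1 then r x else if x < a + 1 then f (a + 1 - x) else f (x - a - 1))"

lemma si_Dbl:
  fixes f r :: "real \<Rightarrow> 'b::{banach,second_countable_topology}"
  assumes f: "set_integrable lborel {0..} f" and r: "set_integrable lborel {0<..<1} r" and a: "a \<ge> 0"
  shows "set_integrable lborel {0<..} (Dbl a r f)"
    and "(LINT x:{0<..}|lborel. Dbl a r f x) =
         (LINT x:{0<..<1}|lborel. r x) + (LINT x:{0<..a}|lborel. f x) + (LINT x:{0..}|lborel. f x)"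
proof -
  have f2: "set_integrable lborel {0<..a} f"
    by (rule set_integrable_subset[OF f]) auto
  have m1: "set_integrable lborel {y. (a+1) + (-1)*y \<in> {0<..a}} (\<lambda>y. f ((a+1) + (-1)*y))"
    and m2: "(LINT y:{y. (a+1) + (-1)*y \<in> {0<..a}}|lborel. f ((a+1) + (-1)*y)) = (LINT y:{0<..a}|lborel. f y)"
    using si_affine[OF f2, of "-1" "a+1"] by auto
  have l1: "set_integrable lborel {y. (-(a+1)) + 1*y \<in> {0..}} (\<lambda>y. f ((-(a+1)) + 1*y))"
    and l2: "(LINT y:{y. (-(a+1)) + 1*y \<in> {0..}}|lborel. f ((-(a+1)) + 1*y)) = (LINT y:{0..}|lborel. f y)"
    using si_affine[OF f, of 1 "-(a+1)"] by auto
  have s1: "{y. (a+1) + (-1)*y \<in> {0<..a}} = {1..<a+1}" by auto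
  have s2: "{y. (-(a+1)) + 1*y \<in> {0..}} = {a+1..}" by auto
  have i1: "set_integrable lborel {0<..<1} (Dbl a r f)"
    using r by (rule set_integrable_cong[THEN iffD1, rotated -1]) (auto simp: Dbl_def)
  have e1: "(LINT x:{0<..<1}|lborel. Dbl a r f x) = (LINT x:{0<..<1}|lborel. r x)"
    by (rule set_lebesgue_integral_cong) (auto simp: Dbl_def)
  have i2: "set_integrable lborel {1..<a+1} (Dbl a r f)"
    using m1 unfolding s1 by (rule set_integrable_cong[THEN iffD1, rotated -1]) (auto simp: Dbl_def)
  have e2: "(LINT x:{1..<a+1}|lborel. Dbl a r f x) = (LINT x:{0<..a}|lborel. f x)"
    using m2 unfolding s1[symmetric] by (subst set_lebesgue_integral_cong[where g="\<lambda>y. f ((a+1) + (-1)*y)"]) (auto simp: Dbl_def)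
  have i3: "set_integrable lborel {a+1..} (Dbl a r f)"
    using l1 unfolding s2 by (rule set_integrable_cong[THEN iffD1, rotated -1]) (insert a, auto simp: Dbl_def algebra_simps)
  have e3: "(LINT x:{a+1..}|lborel. Dbl a r f x) = (LINT x:{0..}|lborel. f x)"
    using l2 unfolding s2[symmetric] by (subst set_lebesgue_integral_cong[where g="\<lambda>y. f ((-(a+1)) + 1*y)"]) (insert a, auto simp: Dbl_def algebra_simps)
  have U: "{0<..} = {0<..<1} \<union> ({1..<a+1} \<union> {a+1..})" using a by auto
  have i23: "set_integrable lborel ({1..<a+1} \<union> {a+1..}) (Dbl a r f)"
    using i2 i3 by (intro set_integrable_Un) auto
  show "set_integrable lborel {0<..} (Dbl a r f)"
    unfolding U by (rule set_integrable_Un[OF i1 i23]) auto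
  show "(LINT x:{0<..}|lborel. Dbl a r f x) =
         (LINT x:{0<..<1}|lborel. r x) + (LINT x:{0<..a}|lborel. f x) + (LINT x:{0..}|lborel. f x)"
  proof -
    have "(LINT x:{0<..}|lborel. Dbl a r f x) = (LINT x:{0<..<1}|lborel. Dbl a r f x) + (LINT x:({1..<a+1} \<union> {a+1..})|lborel. Dbl a r f x)"
      unfolding U by (rule set_integral_Un[OF _ i1 i23]) (insert a, auto)
    also have "(LINT x:({1..<a+1} \<union> {a+1..})|lborel. Dbl a r f x) = (LINT x:{1..<a+1}|lborel. Dbl a r f x) + (LINT x:{a+1..}|lborel. Dbl a r f x)"
      by (rule set_integral_Un[OF _ i2 i3]) auto
    finally show ?thesis by (simp add: e1 e2 e3)
  qed
qed


lemma H1_facts: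
  assumes H: "H1_deriv_halfline v g"
  defines "g' \<equiv> (\<lambda>s. indicator {0<..} s *\<^sub>R g s)"
  shows "g' \<in> borel_measurable borel"
    and "\<And>s t. 0 \<le> s \<Longrightarrow> s \<le> t \<Longrightarrow> set_integrable lborel {s..t} g' \<and> (LINT y:{s..t}|lborel. g' y) = v t - v s"
proof -
  have "g' \<in> borel_measurable lborel" using H unfolding H1_deriv_halfline_def set_borel_measurable_def g'_def by blast
  then show gm: "g' \<in> borel_measurable borel" by simp
  have G: "set_integrable lborel {0..t} g' \<and> (LINT y:{0..t}|lborel. g' y) = v t - v 0" if t: "t \<ge> 0" for t
  proof -
    have i: "set_integrable lborel {0..t} g" and e: "v t = v 0 + (LINT y:{0..t}|lborel. g y)"
      using H t unfolding H1_deriv_halfline_def by blast+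
    have p: "{0..t} - {0} = {0<..t} - {0::real}" by auto
    have i': "set_integrable lborel {0<..t} g" using i si_pt(1)[OF p] by blast
    have i'': "set_integrable lborel {0<..t} g'"
      using i' by (rule set_integrable_cong[THEN iffD1, rotated -1]) (auto simp: g'_def)
    have "(LINT y:{0..t}|lborel. g' y) = (LINT y:{0<..t}|lborel. g' y)" by (rule si_pt(2)[OF p])
    also have "\<dots> = (LINT y:{0<..t}|lborel. g y)" by (rule set_lebesgue_integral_cong) (auto simp: g'_def)
    also have "\<dots> = (LINT y:{0..t}|lborel. g y)" by (rule si_pt(2)[OF p, symmetric])
    finally show ?thesis using e i'' si_pt(1)[OF p] by auto
  qed
  fix s t :: real assume st: "0 \<le> s" "s \<le> t"
  have it: "set_integrable lborel {0..t} g'" and et: "(LINT y:{0..t}|lborel. g' y) = v t - v 0" using G st by auto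
  have es: "(LINT y:{0..s}|lborel. g' y) = v s - v 0" using G st by auto
  have i1: "set_integrable lborel {s..t} g'" by (rule set_integrable_subset[OF it]) (use st in auto)
  have i0: "set_integrable lborel {0..<s} g'" by (rule set_integrable_subset[OF it]) (use st in auto)
  have U: "{0..t} = {0..<s} \<union> {s..t}" using st by auto
  have "(LINT y:{0..t}|lborel. g' y) = (LINT y:{0..<s}|lborel. g' y) + (LINT y:{s..t}|lborel. g' y)"
    unfolding U by (rule set_integral_Un[OF _ i0 i1]) auto
  moreover have "(LINT y:{0..<s}|lborel. g' y) = (LINT y:{0..s}|lborel. g' y)"
    by (rule si_pt(2)[where c=s]) auto
  ultimately show "set_integrable lborel {s..t} g' \<and> (LINT y:{s..t}|lborel. g' y) = v t - v s"
    using i1 et es by (auto simp: algebra_simps)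
qed


lemma si_const:
  fixes c :: "'b::{banach,second_countable_topology}"
  assumes "u \<le> w"
  shows "set_integrable lborel {u..w} (\<lambda>_. c)" "set_integrable lborel {u..<w} (\<lambda>_. c)"
    "(LINT y:{u..w}|lborel. c) = (w - u) *\<^sub>R c" "(LINT y:{u..<w}|lborel. c) = (w - u) *\<^sub>R c"
  using assms by (auto simp: set_integrable_def set_integral_const intro!: integrable_scaleR_left)

lemma ftc_dbl:
  assumes H: "H1_deriv_halfline v g" and a: "a \<ge> 0" and x: "x \<ge> 0"
  defines "g' \<equiv> (\<lambda>s. indicator {0<..} s *\<^sub>R g s)"
  defines "psi \<equiv> (\<lambda>y. if y < 1 then v a else if y < a + 1 then - g' (a + 1 - y) else g' (y - a - 1))"
  shows "set_integrable lborel {0..x} psi \<and> Dbl a (\<lambda>y. complex_of_real y * v a) v x = (LINT y:{0..x}|lborel. psi y)"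
proof -
  note HF = H1_facts(2)[OF H, folded g'_def]
  have c1: "set_integrable lborel {0..<1} psi" "(LINT y:{0..<1}|lborel. psi y) = v a"
  proof -
    have "set_integrable lborel {0..<1::real} (\<lambda>_. v a)" by (rule si_const(2)) simp
    then show "set_integrable lborel {0..<1} psi"
      by (rule set_integrable_cong[THEN iffD1, rotated -1]) (auto simp: psi_def)
    have "(LINT y:{0..<1}|lborel. psi y) = (LINT y:{0..<1::real}|lborel. v a)"
      by (rule set_lebesgue_integral_cong) (auto simp: psi_def)
    then show "(LINT y:{0..<1}|lborel. psi y) = v a" by (simp add: si_const)
  qed
  show ?thesis
  proof (cases "x < 1")
    case True
    have "set_integrable lborel {0..x} (\<lambda>_. v a)" by (rule si_const) (use x in simp)
    then have i: "set_integrable lborel {0..x} psi"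
      by (rule set_integrable_cong[THEN iffD1, rotated -1]) (use True in \<open>auto simp: psi_def\<close>)
    have "(LINT y:{0..x}|lborel. psi y) = (LINT y:{0..x}|lborel. v a)"
      by (rule set_lebesgue_integral_cong) (use True in \<open>auto simp: psi_def\<close>)
    then have "(LINT y:{0..x}|lborel. psi y) = x *\<^sub>R v a" using si_const(3)[OF x, of "v a"] by simp
    then show ?thesis using i True by (simp add: Dbl_def scaleR_conv_of_real)
  next
    case False
    note x1 = False
    show ?thesis
    proof (cases "x < a + 1")
      case True
      have hf: "set_integrable lborel {a+1-x..a} g'" "(LINT y:{a+1-x..a}|lborel. g' y) = v a - v (a+1-x)"
        using HF[of "a+1-x" a] True x1 by auto
      have hm: "set_integrable lborel {a+1-x..a} (\<lambda>s. - g' s)"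
        using hf(1) unfolding set_integrable_def by (simp add: scaleR_right.minus)
      have hme: "(LINT y:{a+1-x..a}|lborel. - g' y) = - (v a - v (a+1-x))"
        using hf by (simp add: set_integral_uminus)
      have pre: "{y. (a+1) + (-1)*y \<in> {a+1-x..a}} = {1..x}" by auto
      have i2: "set_integrable lborel {1..x} psi"
        using si_affine(1)[OF hm, of "-1" "a+1"] unfolding pre
        by (rule set_integrable_cong[THEN iffD1, rotated -1]) (use True in \<open>auto simp: psi_def\<close>)
      have e2: "(LINT y:{1..x}|lborel. psi y) = - (v a - v (a+1-x))"
        using si_affine(2)[OF hm, of "-1" "a+1"] unfolding pre hme
        by (subst set_lebesgue_integral_cong[where g="\<lambda>y. - g' ((a+1) + (-1)*y)"]) (use True in \<open>auto simp: psi_def\<close>)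
      have U: "{0..x} = {0..<1} \<union> {1..x}" using x1 by auto
      have i: "set_integrable lborel {0..x} psi" unfolding U by (rule set_integrable_Un[OF c1(1) i2]) auto
      have "(LINT y:{0..x}|lborel. psi y) = (LINT y:{0..<1}|lborel. psi y) + (LINT y:{1..x}|lborel. psi y)"
        unfolding U by (rule set_integral_Un[OF _ c1(1) i2]) auto
      then show ?thesis using i c1(2) e2 True x1 by (simp add: Dbl_def)
    next
      case False
      have hf0: "set_integrable lborel {0..a} g'" "(LINT y:{0..a}|lborel. g' y) = v a - v 0"
        using HF[of 0 a] a by auto
      have p: "{0..a} - {0} = {0<..a} - {0::real}" by auto
      have hf: "set_integrable lborel {0<..a} g'" "(LINT y:{0<..a}|lborel. g' y) = v a - v 0"
        using hf0 si_pt[OF p, of g'] by auto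
      have hm: "set_integrable lborel {0<..a} (\<lambda>s. - g' s)"
        using hf(1) unfolding set_integrable_def by (simp add: scaleR_right.minus)
      have hme: "(LINT y:{0<..a}|lborel. - g' y) = - (v a - v 0)"
        using hf by (simp add: set_integral_uminus)
      have pre: "{y. (a+1) + (-1)*y \<in> {0<..a}} = {1..<a+1}" by auto
      have i2: "set_integrable lborel {1..<a+1} psi"
        using si_affine(1)[OF hm, of "-1" "a+1"] unfolding pre
        by (rule set_integrable_cong[THEN iffD1, rotated -1]) (auto simp: psi_def)
      have e2: "(LINT y:{1..<a+1}|lborel. psi y) = - (v a - v 0)"
        using si_affine(2)[OF hm, of "-1" "a+1"] unfolding pre hme
        by (subst set_lebesgue_integral_cong[where g="\<lambda>y. - g' ((a+1) + (-1)*y)"]) (auto simp: psi_def)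
      have hf3: "set_integrable lborel {0..x-a-1} g'" "(LINT y:{0..x-a-1}|lborel. g' y) = v (x-a-1) - v 0"
        using HF[of 0 "x-a-1"] False by auto
      have pre3: "{y. (-(a+1)) + 1*y \<in> {0..x-a-1}} = {a+1..x}" by auto
      have i3: "set_integrable lborel {a+1..x} psi"
        using si_affine(1)[OF hf3(1), of 1 "-(a+1)"] unfolding pre3
        by (rule set_integrable_cong[THEN iffD1, rotated -1]) (use a in \<open>auto simp: psi_def algebra_simps\<close>)
      have e3: "(LINT y:{a+1..x}|lborel. psi y) = v (x-a-1) - v 0"
        using si_affine(2)[OF hf3(1), of 1 "-(a+1)"] unfolding pre3 hf3(2)
        by (subst set_lebesgue_integral_cong[where g="\<lambda>y. g' ((-(a+1)) + 1*y)"]) (use a in \<open>auto simp: psi_def algebra_simps\<close>)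
      have U: "{0..x} = {0..<1} \<union> ({1..<a+1} \<union> {a+1..x})" using False a by auto
      have i23: "set_integrable lborel ({1..<a+1} \<union> {a+1..x}) psi" by (rule set_integrable_Un[OF i2 i3]) auto
      have i: "set_integrable lborel {0..x} psi" unfolding U by (rule set_integrable_Un[OF c1(1) i23]) auto
      have "(LINT y:{0..x}|lborel. psi y) = (LINT y:{0..<1}|lborel. psi y) + (LINT y:({1..<a+1} \<union> {a+1..x})|lborel. psi y)"
        unfolding U by (rule set_integral_Un[OF _ c1(1) i23]) (use a in auto)
      also have "(LINT y:({1..<a+1} \<union> {a+1..x})|lborel. psi y) = (LINT y:{1..<a+1}|lborel. psi y) + (LINT y:{a+1..x}|lborel. psi y)"
        by (rule set_integral_Un[OF _ i2 i3]) auto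
      finally show ?thesis using i c1(2) e2 e3 False x1 a by (simp add: Dbl_def)
    qed
  qed
qed


lemma si_const2:
  fixes c :: "'b::{banach,second_countable_topology}" and u w :: real
  assumes "u \<le> w"
  shows "set_integrable lborel {u<..w} (\<lambda>_. c)" "set_integrable lborel {u<..<w} (\<lambda>_. c)"
    "(LINT y:{u<..w}|lborel. c) = (w - u) *\<^sub>R c" "(LINT y:{u<..<w}|lborel. c) = (w - u) *\<^sub>R c"
  using assms by (auto simp: set_integrable_def set_integral_const intro!: integrable_scaleR_left)

lemma si_mono_set:
  fixes f :: "real \<Rightarrow> real"
  assumes "set_integrable lborel T f" "S \<subseteq> T" "S \<in> sets lborel" "\<And>x. x \<in> T \<Longrightarrow> f x \<ge> 0"
  shows "(LINT x:S|lborel. f x) \<le> (LINT x:T|lborel. f x)"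
proof -
  have iS: "set_integrable lborel S f" by (rule set_integrable_subset[OF assms(1,3,2)])
  show ?thesis
    unfolding set_lebesgue_integral_def
    apply (rule integral_mono)
    using iS assms(1) unfolding set_integrable_def apply auto[2]
    using assms(2,4) by (auto simp: indicator_def)
qed

lemma si_nonneg:
  fixes f :: "real \<Rightarrow> real"
  assumes "\<And>x. x \<in> T \<Longrightarrow> f x \<ge> 0"
  shows "(LINT x:T|lborel. f x) \<ge> 0"
  unfolding set_lebesgue_integral_def
  by (rule integral_nonneg_AE) (use assms in \<open>auto simp: indicator_def\<close>)

lemma int01_bound:
  fixes r :: "real \<Rightarrow> real"
  assumes m: "r \<in> borel_measurable borel" and b: "\<And>y. y \<in> {0<..<1} \<Longrightarrow> \<bar>r y\<bar> \<le> B"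
  shows "set_integrable lborel {0<..<1} r" "\<bar>LINT y:{0<..<1}|lborel. r y\<bar> \<le> B"
proof -
  show i: "set_integrable lborel {0<..<1} r"
    unfolding set_integrable_def
    by (rule integrableI_bounded_set_indicator[where B=B]) (use m b in auto)
  have B0: "0 \<le> B" using b[of "1/2"] by auto
  have "\<bar>LINT y:{0<..<1}|lborel. r y\<bar> \<le> (LINT y:{0<..<1}|lborel. norm (r y))"
    using set_integral_norm_bound[OF i] by simp
  also have "\<dots> \<le> (LINT y:{0<..<1::real}|lborel. B)"
    by (rule set_integral_mono) (use i b in \<open>auto simp: set_integrable_abs si_const2\<close>)
  also have "\<dots> = B" by (simp add: si_const2)
  finally show "\<bar>LINT y:{0<..<1}|lborel. r y\<bar> \<le> B" .
qed

lemma sln_bound: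
  fixes s :: real assumes "0 \<le> s" "s \<le> 1"
  shows "\<bar>s * ln s\<bar> \<le> 1"
proof (cases "s = 0")
  case False
  then have s0: "0 < s" using assms by auto
  have "ln (1/s) \<le> 1/s - 1" using ln_le_minus_one[of "1/s"] s0 by simp
  then have "- ln s \<le> 1/s - 1" using s0 by (simp add: ln_div)
  then have "s * (- ln s) \<le> s * (1/s - 1)" using s0 by (intro mult_left_mono) auto
  then have a: "- (s * ln s) \<le> 1 - s" using s0 by (simp add: algebra_simps)
  have "ln s \<le> 0" using assms s0 by simp
  then have "s * ln s \<le> 0" using s0 by (simp add: mult_nonneg_nonpos)
  then show ?thesis using a assms by linarith
qed simp

lemma r3_bound:
  fixes t y :: real assumes t: "0 \<le> t" and y: "0 < y" "y < 1"
  shows "\<bar>(y\<^sup>2 * t) * ln (y\<^sup>2 * t)\<bar> \<le> t * (1 + \<bar>ln t\<bar>)"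
proof (cases "t = 0")
  case False
  then have t0: "0 < t" using t by auto
  have y2: "0 < y\<^sup>2" "y\<^sup>2 \<le> 1" using y by (auto simp: power_le_one)
  have "(y\<^sup>2 * t) * ln (y\<^sup>2 * t) = t * (y\<^sup>2 * ln (y\<^sup>2)) + y\<^sup>2 * (t * ln t)"
    using t0 y2 by (simp add: ln_mult algebra_simps)
  moreover have "\<bar>t * (y\<^sup>2 * ln (y\<^sup>2)) + y\<^sup>2 * (t * ln t)\<bar> \<le> \<bar>t * (y\<^sup>2 * ln (y\<^sup>2))\<bar> + \<bar>y\<^sup>2 * (t * ln t)\<bar>"
    by (rule abs_triangle_ineq)
  moreover have "\<bar>t * (y\<^sup>2 * ln (y\<^sup>2))\<bar> = t * \<bar>y\<^sup>2 * ln (y\<^sup>2)\<bar>" using t0 by (simp add: abs_mult)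
  moreover have "\<bar>y\<^sup>2 * (t * ln t)\<bar> = y\<^sup>2 * (t * \<bar>ln t\<bar>)" using t0 by (simp add: abs_mult)
  ultimately have "\<bar>(y\<^sup>2 * t) * ln (y\<^sup>2 * t)\<bar> \<le> t * \<bar>y\<^sup>2 * ln (y\<^sup>2)\<bar> + y\<^sup>2 * (t * \<bar>ln t\<bar>)"
    by simp
  also have "\<dots> \<le> t * 1 + 1 * (t * \<bar>ln t\<bar>)"
    using sln_bound[of "y\<^sup>2"] y2 t0
    by (intro add_mono mult_left_mono mult_right_mono) auto
  finally show ?thesis by (simp add: algebra_simps)
qed simp

lemma small_delta:
  fixes \<epsilon> w :: real assumes e: "\<epsilon> > 0"
  shows "\<exists>\<delta>>0. \<forall>t. 0 \<le> t \<and> t < \<delta> \<longrightarrow> t * (2 + \<bar>w\<bar> + \<bar>ln t\<bar>) < \<epsilon>"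
proof -
  have "((\<lambda>t. t * (2 + \<bar>w\<bar> - ln t)) \<longlongrightarrow> 0) (at_right 0)" by real_asymp
  then have ev: "eventually (\<lambda>t. t * (2 + \<bar>w\<bar> - ln t) < \<epsilon>) (at_right (0::real))"
    using e by (simp add: order_tendstoD(2))
  have ev2: "eventually (\<lambda>t. t < (1::real)) (at_right 0)"
    unfolding eventually_at_right_field by (intro exI[of _ 1]) auto
  have "eventually (\<lambda>t. t * (2 + \<bar>w\<bar> + \<bar>ln t\<bar>) < \<epsilon>) (at_right (0::real))"
    using ev ev2 eventually_at_right_less[of 0]
  proof (eventually_elim)
    case (elim t)
    then have "\<bar>ln t\<bar> = - ln t" by simp
    then show ?case using elim by simp
  qed
  then obtain b where b: "b > 0" "\<And>t. 0 < t \<Longrightarrow> t < b \<Longrightarrow> t * (2 + \<bar>w\<bar> + \<bar>ln t\<bar>) < \<epsilon>"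
    unfolding eventually_at_right_field by auto
  show ?thesis
  proof (intro exI[of _ b] conjI allI impI)
    fix t :: real assume "0 \<le> t \<and> t < b"
    then show "t * (2 + \<bar>w\<bar> + \<bar>ln t\<bar>) < \<epsilon>"
      using b(2)[of t] e by (cases "t = 0") auto
  qed (use b in auto)
qed


lemma doubling:
  fixes \<omega> \<epsilon> :: real
  assumes W: "in_W_halfline v g" and e: "\<epsilon> > 0"
  shows "\<exists>\<phi> \<psi>. in_W_halfline \<phi> \<psi> \<and> \<phi> 0 = 0 \<and> \<bar>L2sq_halfline \<phi> - 2 * L2sq_halfline v\<bar> < \<epsilon>
            \<and> \<bar>I_halfline \<phi> \<psi> \<omega> - 2 * I_halfline v g \<omega>\<bar> < \<epsilon>"
proof -
  have H: "H1_deriv_halfline v g" using W by (simp add: in_W_halfline_def)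
  define g' where "g' = (\<lambda>s. indicator {0<..} s *\<^sub>R g s)"
  have gm[measurable]: "g' \<in> borel_measurable borel" using H1_facts(1)[OF H] g'_def by simp
  define fN where "fN = (\<lambda>x. (cmod (v x))\<^sup>2)"
  define fD where "fD = (\<lambda>x. (cmod (g' x))\<^sup>2)"
  define fL where "fL = (\<lambda>x. (cmod (v x))\<^sup>2 * ln ((cmod (v x))\<^sup>2))"
  have p0: "{0..} - {0} = {0<..} - {0::real}" by auto
  have iN': "set_integrable lborel {0<..} fN" using H unfolding H1_deriv_halfline_def fN_def by blast
  have iL': "set_integrable lborel {0<..} fL" using W unfolding in_W_halfline_def fL_def by blast
  have ig: "set_integrable lborel {0<..} (\<lambda>x. (cmod (g x))\<^sup>2)" using H unfolding H1_deriv_halfline_def by blast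
  have iD': "set_integrable lborel {0<..} fD"
    using ig by (rule set_integrable_cong[THEN iffD1, rotated -1]) (auto simp: fD_def g'_def)
  have iN: "set_integrable lborel {0..} fN" using iN' si_pt(1)[OF p0] by blast
  have iD: "set_integrable lborel {0..} fD" using iD' si_pt(1)[OF p0] by blast
  have iL: "set_integrable lborel {0..} fL" using iL' si_pt(1)[OF p0] by blast
  define N0 where "N0 = (LINT x:{0..}|lborel. fN x)"
  define D0 where "D0 = (LINT x:{0..}|lborel. fD x)"
  define L0 where "L0 = (LINT x:{0..}|lborel. fL x)"
  have vN: "L2sq_halfline v = N0" unfolding L2sq_halfline_def N0_def fN_def by (simp add: si_pt(2)[OF p0])
  have vL: "logterm_halfline v = L0" unfolding logterm_halfline_def L0_def fL_def by (simp add: si_pt(2)[OF p0])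
  have vD: "L2sq_halfline g = D0"
  proof -
    have "L2sq_halfline g = (LINT x:{0<..}|lborel. fD x)"
      unfolding L2sq_halfline_def by (rule set_lebesgue_integral_cong) (auto simp: fD_def g'_def)
    then show ?thesis unfolding D0_def by (simp add: si_pt(2)[OF p0])
  qed
  have tl: "((\<lambda>b. LINT x:{0<..b}|lborel. f x) \<longlongrightarrow> (LINT x:{0..}|lborel. f x)) at_top"
    if fi: "set_integrable lborel {0..} f" for f :: "real \<Rightarrow> real"
  proof -
    have "(\<lambda>b. LINT x:{0<..b}|lborel. f x) = (\<lambda>b. LINT x:{0..b}|lborel. f x)"
      by (rule ext, rule si_pt(2)[where c=0]) auto
    then show ?thesis using tendsto_set_lebesgue_integral_at_top[OF _ fi] by simp
  qed
  have t1: "((\<lambda>b. LINT x:{0<..b}|lborel. fN x) \<longlongrightarrow> N0) at_top" using tl[OF iN] N0_def by simp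
  have t2: "((\<lambda>b. (LINT x:{0<..b}|lborel. fD x) + \<omega> * (LINT x:{0<..b}|lborel. fN x) - (LINT x:{0<..b}|lborel. fL x))
             \<longlongrightarrow> D0 + \<omega> * N0 - L0) at_top"
    unfolding N0_def D0_def L0_def by (intro tendsto_intros tl iN iD iL)
  have e2: "\<epsilon>/2 > 0" using e by simp
  have ev: "eventually (\<lambda>b. \<bar>(LINT x:{0<..b}|lborel. fN x) - N0\<bar> < \<epsilon>/2 \<and>
      \<bar>((LINT x:{0<..b}|lborel. fD x) + \<omega> * (LINT x:{0<..b}|lborel. fN x) - (LINT x:{0<..b}|lborel. fL x)) - (D0 + \<omega> * N0 - L0)\<bar> < \<epsilon>/2) at_top"
    using tendstoD[OF t1 e2] tendstoD[OF t2 e2] by eventually_elim (simp add: dist_real_def)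
  then obtain A where A: "\<And>b. b \<ge> A \<Longrightarrow> \<bar>(LINT x:{0<..b}|lborel. fN x) - N0\<bar> < \<epsilon>/2 \<and>
      \<bar>((LINT x:{0<..b}|lborel. fD x) + \<omega> * (LINT x:{0<..b}|lborel. fN x) - (LINT x:{0<..b}|lborel. fL x)) - (D0 + \<omega> * N0 - L0)\<bar> < \<epsilon>/2"
    unfolding eventually_at_top_linorder by blast
  obtain \<delta> where d: "\<delta> > 0" "\<And>t. 0 \<le> t \<Longrightarrow> t < \<delta> \<Longrightarrow> t * (2 + \<bar>\<omega>\<bar> + \<bar>ln t\<bar>) < \<epsilon>/2"
    using small_delta[OF e2, of \<omega>] by blast
  define A' where "A' = max A 0"
  have fN0: "\<And>x. fN x \<ge> 0" by (simp add: fN_def)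
  obtain a where a: "a \<ge> A'" "fN a < \<delta>"
  proof (rule ccontr)
    assume "\<not> thesis"
    then have big: "\<And>a. a \<ge> A' \<Longrightarrow> fN a \<ge> \<delta>" using that by force
    define K where "K = N0 / \<delta> + 1"
    have N0nn: "N0 \<ge> 0" unfolding N0_def by (rule si_nonneg) (simp add: fN0)
    have K0: "K > 0" unfolding K_def using N0nn d(1) by (smt (verit) divide_nonneg_pos)
    have "(LINT x:{A'..A'+K}|lborel. \<delta>) \<le> (LINT x:{A'..A'+K}|lborel. fN x)"
      by (rule set_integral_mono) (use K0 big in \<open>auto intro: si_const set_integrable_subset[OF iN] simp: A'_def\<close>)
    also have "\<dots> \<le> N0" unfolding N0_def
      by (rule si_mono_set[OF iN]) (auto simp: A'_def fN0)
    finally have "K * \<delta> \<le> N0" using K0 by (simp add: si_const)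
    moreover have "K * \<delta> = N0 + \<delta>" unfolding K_def using d(1) by (simp add: field_simps)
    ultimately show False using d(1) by simp
  qed
  have a0: "a \<ge> 0" and aA: "a \<ge> A" using a(1) by (auto simp: A'_def)
  define t where "t = fN a"
  have t0: "t \<ge> 0" "t < \<delta>" using a(2) by (auto simp: t_def fN0)
  define \<phi> where "\<phi> = Dbl a (\<lambda>y. complex_of_real y * v a) v"
  define \<psi> where "\<psi> = (\<lambda>y. if y < 1 then v a else if y < a + 1 then - g' (a + 1 - y) else g' (y - a - 1))"
  define r1 where "r1 = (\<lambda>y::real. y\<^sup>2 * t)"
  define r2 where "r2 = (\<lambda>y::real. t)"
  define r3 where "r3 = (\<lambda>y::real. (y\<^sup>2 * t) * ln (y\<^sup>2 * t))"
  have eq1: "(\<lambda>x. (cmod (\<phi> x))\<^sup>2) = Dbl a r1 fN"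
    by (rule ext) (simp add: \<phi>_def Dbl_def r1_def fN_def t_def norm_mult power_mult_distrib)
  have eq2: "(\<lambda>x. (cmod (\<psi> x))\<^sup>2) = Dbl a r2 fD"
    by (rule ext) (simp add: \<psi>_def Dbl_def r2_def fD_def t_def fN_def)
  have eq3: "(\<lambda>x. (cmod (\<phi> x))\<^sup>2 * ln ((cmod (\<phi> x))\<^sup>2)) = Dbl a r3 fL"
    by (rule ext) (simp add: \<phi>_def Dbl_def r3_def fL_def t_def fN_def norm_mult power_mult_distrib)
  have b1: "set_integrable lborel {0<..<1} r1" "\<bar>LINT y:{0<..<1}|lborel. r1 y\<bar> \<le> t"
    by (rule int01_bound; use t0 in \<open>auto simp: r1_def abs_mult power_le_one intro!: mult_left_le_one_le\<close>)+
  have b2: "set_integrable lborel {0<..<1} r2" "\<bar>LINT y:{0<..<1}|lborel. r2 y\<bar> \<le> t"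
    by (rule int01_bound; use t0 in \<open>auto simp: r2_def\<close>)+
  have b3: "set_integrable lborel {0<..<1} r3" "\<bar>LINT y:{0<..<1}|lborel. r3 y\<bar> \<le> t * (1 + \<bar>ln t\<bar>)"
    by (rule int01_bound; use t0 r3_bound in \<open>auto simp: r3_def\<close>)+
  note s1 = si_Dbl[OF iN b1(1) a0] and s2 = si_Dbl[OF iD b2(1) a0] and s3 = si_Dbl[OF iL b3(1) a0]
  have Nphi: "L2sq_halfline \<phi> = (LINT y:{0<..<1}|lborel. r1 y) + (LINT x:{0<..a}|lborel. fN x) + N0"
    unfolding L2sq_halfline_def eq1 s1(2) N0_def ..
  have Dpsi: "L2sq_halfline \<psi> = (LINT y:{0<..<1}|lborel. r2 y) + (LINT x:{0<..a}|lborel. fD x) + D0"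
    unfolding L2sq_halfline_def eq2 s2(2) D0_def ..
  have Lphi: "logterm_halfline \<phi> = (LINT y:{0<..<1}|lborel. r3 y) + (LINT x:{0<..a}|lborel. fL x) + L0"
    unfolding logterm_halfline_def eq3 s3(2) L0_def ..
  have phi0: "\<phi> 0 = 0" by (simp add: \<phi>_def Dbl_def)
  have psim: "\<psi> \<in> borel_measurable lborel" unfolding \<psi>_def by measurable
  have inW: "in_W_halfline \<phi> \<psi>"
    unfolding in_W_halfline_def H1_deriv_halfline_def
  proof (intro conjI allI impI)
    show "set_integrable lborel {0<..} (\<lambda>x. (cmod (\<phi> x))\<^sup>2)" unfolding eq1 by (rule s1(1))
    show "set_integrable lborel {0<..} (\<lambda>x. (cmod (\<psi> x))\<^sup>2)" unfolding eq2 by (rule s2(1))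
    show "set_integrable lborel {0<..} (\<lambda>x. (cmod (\<phi> x))\<^sup>2 * ln ((cmod (\<phi> x))\<^sup>2))" unfolding eq3 by (rule s3(1))
    show "set_borel_measurable lborel {0<..} \<psi>" unfolding set_borel_measurable_def using psim by measurable
    fix x :: real assume x: "0 \<le> x"
    have F: "set_integrable lborel {0..x} \<psi> \<and> \<phi> x = (LINT y:{0..x}|lborel. \<psi> y)"
      unfolding \<psi>_def \<phi>_def g'_def using ftc_dbl[OF H a0 x] by simp
    then show "set_integrable lborel {0..x} \<psi>" by blast
    show "\<phi> x = \<phi> 0 + (LINT y:{0..x}|lborel. \<psi> y)" using F phi0 by simp
  qed
  define R1 where "R1 = (LINT y:{0<..<1}|lborel. r1 y)"
  define R2 where "R2 = (LINT y:{0<..<1}|lborel. r2 y)"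
  define R3 where "R3 = (LINT y:{0<..<1}|lborel. r3 y)"
  have Aa: "\<bar>(LINT x:{0<..a}|lborel. fN x) - N0\<bar> < \<epsilon>/2"
     "\<bar>((LINT x:{0<..a}|lborel. fD x) + \<omega> * (LINT x:{0<..a}|lborel. fN x) - (LINT x:{0<..a}|lborel. fL x)) - (D0 + \<omega> * N0 - L0)\<bar> < \<epsilon>/2"
    using A[OF aA] by auto
  have sm: "t * (2 + \<bar>\<omega>\<bar> + \<bar>ln t\<bar>) < \<epsilon>/2" using d(2) t0 by auto
  have tle: "t \<le> t * (2 + \<bar>\<omega>\<bar> + \<bar>ln t\<bar>)" using t0 by (simp add: mult_le_cancel_left1) 
  have wR1: "\<bar>\<omega> * R1\<bar> \<le> \<bar>\<omega>\<bar> * t" unfolding R1_def using b1(2) by (simp add: abs_mult mult_left_mono)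
  have ram: "\<bar>R2 + \<omega> * R1 - R3\<bar> \<le> t * (2 + \<bar>\<omega>\<bar> + \<bar>ln t\<bar>)"
  proof -
    have "\<bar>R2 + \<omega> * R1 - R3\<bar> \<le> \<bar>R2\<bar> + \<bar>\<omega> * R1\<bar> + \<bar>R3\<bar>" by linarith
    also have "\<dots> \<le> t + \<bar>\<omega>\<bar> * t + t * (1 + \<bar>ln t\<bar>)"
      using b2(2) wR1 b3(2) unfolding R2_def R3_def by linarith
    finally show ?thesis by (simp add: algebra_simps)
  qed
  show ?thesis
  proof (rule exI[of _ \<phi>], rule exI[of _ \<psi>], intro conjI inW phi0)
    show "\<bar>L2sq_halfline \<phi> - 2 * L2sq_halfline v\<bar> < \<epsilon>"
      unfolding Nphi vN using b1(2) Aa(1) sm tle by linarith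
    show "\<bar>I_halfline \<phi> \<psi> \<omega> - 2 * I_halfline v g \<omega>\<bar> < \<epsilon>"
    proof -
      have "I_halfline \<phi> \<psi> \<omega> - 2 * I_halfline v g \<omega> = (R2 + \<omega> * R1 - R3) +
         (((LINT x:{0<..a}|lborel. fD x) + \<omega> * (LINT x:{0<..a}|lborel. fN x) - (LINT x:{0<..a}|lborel. fL x)) - (D0 + \<omega> * N0 - L0))"
        unfolding I_halfline_def Nphi Dpsi Lphi vN vD vL R1_def R2_def R3_def by (simp add: algebra_simps)
      then show ?thesis using ram Aa(2) sm by linarith
    qed

  qed
qed


lemma int_support01:
  fixes f :: "real \<Rightarrow> real"
  assumes m: "f \<in> borel_measurable borel" and z: "\<And>x. x \<ge> 1 \<Longrightarrow> f x = 0"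
    and b: "\<And>x. 0 < x \<Longrightarrow> x < 1 \<Longrightarrow> \<bar>f x\<bar> \<le> 1"
  shows "set_integrable lborel {0<..} f"
  unfolding set_integrable_def
  by (rule integrableI_bounded_set[where A="{0<..<1}" and B=1]) (use m z b in \<open>auto simp: indicator_def\<close>)

lemma witness0:
  defines "v0 \<equiv> (\<lambda>x::real. if x < 1 then complex_of_real (1 - x) else 0)"
  defines "g0 \<equiv> (\<lambda>x::real. if x < 1 then (-1::complex) else 0)"
  shows "in_W_halfline v0 g0" "L2sq_halfline v0 > 0"
proof -
  have nv: "\<And>x. 0 < x \<Longrightarrow> x < 1 \<Longrightarrow> (cmod (v0 x))\<^sup>2 = (1 - x)\<^sup>2" by (simp add: v0_def del: of_real_diff)
  have i1: "set_integrable lborel {0<..} (\<lambda>x. (cmod (v0 x))\<^sup>2)"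
  proof (rule int_support01)
    show "(\<lambda>x. (cmod (v0 x))\<^sup>2) \<in> borel_measurable borel" unfolding v0_def by measurable
    show "(cmod (v0 x))\<^sup>2 = 0" if "x \<ge> 1" for x using that by (simp add: v0_def)
    fix x :: real assume x: "0 < x" "x < 1"
    then show "\<bar>(cmod (v0 x))\<^sup>2\<bar> \<le> 1" using nv[OF x] by (simp add: abs_square_le_1)
  qed
  have i2: "set_integrable lborel {0<..} (\<lambda>x. (cmod (g0 x))\<^sup>2)"
    by (rule int_support01) (auto simp: g0_def)
  have i3: "set_integrable lborel {0<..} (\<lambda>x. (cmod (v0 x))\<^sup>2 * ln ((cmod (v0 x))\<^sup>2))"
  proof (rule int_support01)
    show "(\<lambda>x. (cmod (v0 x))\<^sup>2 * ln ((cmod (v0 x))\<^sup>2)) \<in> borel_measurable borel" unfolding v0_def by measurable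
    show "(cmod (v0 x))\<^sup>2 * ln ((cmod (v0 x))\<^sup>2) = 0" if "x \<ge> 1" for x using that by (simp add: v0_def del: of_real_diff)
    fix x :: real assume x: "0 < x" "x < 1"
    have "0 \<le> (1 - x)\<^sup>2" "(1 - x)\<^sup>2 \<le> 1" using x by (auto simp: abs_square_le_1)
    then show "\<bar>(cmod (v0 x))\<^sup>2 * ln ((cmod (v0 x))\<^sup>2)\<bar> \<le> 1" using nv[OF x] sln_bound by simp
  qed
  have gm: "set_borel_measurable lborel {0<..} g0"
    unfolding set_borel_measurable_def g0_def by measurable
  have ftc: "set_integrable lborel {0..x} g0 \<and> v0 x = v0 0 + (LINT t:{0..x}|lborel. g0 t)" if x: "x \<ge> 0" for x
  proof (cases "x < 1")
    case True
    have "set_integrable lborel {0..x} (\<lambda>_. -1::complex)" by (rule si_const) (use x in simp)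
    then have i: "set_integrable lborel {0..x} g0"
      by (rule set_integrable_cong[THEN iffD1, rotated -1]) (use True in \<open>auto simp: g0_def\<close>)
    have "(LINT t:{0..x}|lborel. g0 t) = (LINT t:{0..x}|lborel. (-1::complex))"
      by (rule set_lebesgue_integral_cong) (use True in \<open>auto simp: g0_def\<close>)
    then have "(LINT t:{0..x}|lborel. g0 t) = x *\<^sub>R (-1)" using si_const(3)[OF x, of "-1::complex"] by simp
    then show ?thesis using i True by (simp add: v0_def scaleR_conv_of_real)
  next
    case False
    have "set_integrable lborel {0..<1::real} (\<lambda>_. -1::complex)" by (rule si_const(2)) simp
    then have i1: "set_integrable lborel {0..<1} g0"
      by (rule set_integrable_cong[THEN iffD1, rotated -1]) (auto simp: g0_def)
    have e1: "(LINT t:{0..<1}|lborel. g0 t) = (LINT t:{0..<1::real}|lborel. (-1::complex))"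
      by (rule set_lebesgue_integral_cong) (auto simp: g0_def)
    have i2: "set_integrable lborel {1..x} g0"
      by (rule set_integrable_cong[where f'="\<lambda>_. 0", THEN iffD2]) (auto simp: g0_def set_integrable_def)
    have e2: "(LINT t:{1..x}|lborel. g0 t) = (LINT t:{1..x}|lborel. (0::complex))"
      by (rule set_lebesgue_integral_cong) (auto simp: g0_def)
    have U: "{0..x} = {0..<1} \<union> {1..x}" using False by auto
    have i: "set_integrable lborel {0..x} g0" unfolding U by (rule set_integrable_Un[OF i1 i2]) auto
    have "(LINT t:{0..x}|lborel. g0 t) = (LINT t:{0..<1}|lborel. g0 t) + (LINT t:{1..x}|lborel. g0 t)"
      unfolding U by (rule set_integral_Un[OF _ i1 i2]) auto
    then show ?thesis using i e1 e2 False by (simp add: v0_def si_const)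
  qed
  show "in_W_halfline v0 g0"
    unfolding in_W_halfline_def H1_deriv_halfline_def using i1 i2 i3 gm ftc by blast
  have "(LINT x:{0<..1/2::real}|lborel. 1/4) \<le> (LINT x:{0<..1/2}|lborel. (cmod (v0 x))\<^sup>2)"
  proof (rule set_integral_mono)
    show "set_integrable lborel {0<..1/2::real} (\<lambda>x. 1/4::real)" by (rule si_const2) simp
    show "set_integrable lborel {0<..1/2} (\<lambda>x. (cmod (v0 x))\<^sup>2)" by (rule set_integrable_subset[OF i1]) auto
    fix x :: real assume x: "x \<in> {0<..1/2}"
    then have "1/2 \<le> 1 - x" by auto
    then have "(1/2)\<^sup>2 \<le> (1 - x)\<^sup>2" by (rule power_mono) simp
    then show "1/4 \<le> (cmod (v0 x))\<^sup>2" using x nv[of x] by (simp add: power2_eq_square)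
  qed
  also have "\<dots> \<le> L2sq_halfline v0" unfolding L2sq_halfline_def
    by (rule si_mono_set[OF i1]) auto
  finally show "L2sq_halfline v0 > 0" by (simp add: si_const2)
qed


lemma witness:
  fixes \<omega> :: real
  shows "\<exists>v g. in_W_halfline v g \<and> (\<exists>x\<ge>0. v x \<noteq> 0) \<and> I_halfline v g \<omega> = 0"
proof -
  have "\<exists>v0 g0. in_W_halfline v0 g0 \<and> L2sq_halfline v0 > 0 \<and> v0 0 = 1"
    apply (rule exI[of _ "\<lambda>x::real. if x < 1 then complex_of_real (1 - x) else 0"],
           rule exI[of _ "\<lambda>x::real. if x < 1 then (-1::complex) else 0"])
    using witness0 by simp
  then obtain v0 g0 where W0: "in_W_halfline v0 g0" and N0p: "L2sq_halfline v0 > 0" and v00: "v0 0 = 1" by blast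
  define N0 where "N0 = L2sq_halfline v0"
  define D0 where "D0 = L2sq_halfline g0"
  define L0 where "L0 = logterm_halfline v0"
  define k where "k = (D0 + \<omega> * N0 - L0) / N0"
  define \<mu> where "\<mu> = exp k"
  define c where "c = complex_of_real (exp (k/2))"
  have cm: "(cmod c)\<^sup>2 = \<mu>" unfolding c_def \<mu>_def
    by (simp add: power2_eq_square exp_add[symmetric])
  have mu0: "\<mu> > 0" by (simp add: \<mu>_def)
  have lnmu: "ln \<mu> = k" by (simp add: \<mu>_def)
  define v where "v = (\<lambda>x. c * v0 x)"
  define g where "g = (\<lambda>x. c * g0 x)"
  have nv: "\<And>x. (cmod (v x))\<^sup>2 = \<mu> * (cmod (v0 x))\<^sup>2" unfolding v_def using cm by (simp add: norm_mult power_mult_distrib)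
  have ng: "\<And>x. (cmod (g x))\<^sup>2 = \<mu> * (cmod (g0 x))\<^sup>2" unfolding g_def using cm by (simp add: norm_mult power_mult_distrib)
  have nl: "\<And>x. (cmod (v x))\<^sup>2 * ln ((cmod (v x))\<^sup>2) = \<mu> * ((cmod (v0 x))\<^sup>2 * k) + \<mu> * ((cmod (v0 x))\<^sup>2 * ln ((cmod (v0 x))\<^sup>2))"
  proof -
    fix x
    show "(cmod (v x))\<^sup>2 * ln ((cmod (v x))\<^sup>2) = \<mu> * ((cmod (v0 x))\<^sup>2 * k) + \<mu> * ((cmod (v0 x))\<^sup>2 * ln ((cmod (v0 x))\<^sup>2))"
    proof (cases "v0 x = 0")
      case False
      then have "(cmod (v0 x))\<^sup>2 > 0" by simp
      then have "ln (\<mu> * (cmod (v0 x))\<^sup>2) = k + ln ((cmod (v0 x))\<^sup>2)" using mu0 lnmu by (simp add: ln_mult)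
      then show ?thesis unfolding nv by (simp add: algebra_simps)
    qed (simp add: nv)
  qed
  have H0: "H1_deriv_halfline v0 g0" using W0 by (simp add: in_W_halfline_def)
  have iN: "set_integrable lborel {0<..} (\<lambda>x. (cmod (v0 x))\<^sup>2)" using H0 unfolding H1_deriv_halfline_def by blast
  have iD: "set_integrable lborel {0<..} (\<lambda>x. (cmod (g0 x))\<^sup>2)" using H0 unfolding H1_deriv_halfline_def by blast
  have iL: "set_integrable lborel {0<..} (\<lambda>x. (cmod (v0 x))\<^sup>2 * ln ((cmod (v0 x))\<^sup>2))" using W0 unfolding in_W_halfline_def by blast
  have gm0: "(\<lambda>x. indicator {0<..} x *\<^sub>R g0 x) \<in> borel_measurable lborel"
    using H0 unfolding H1_deriv_halfline_def set_borel_measurable_def by blast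
  have ftc0: "\<And>x. x \<ge> 0 \<Longrightarrow> set_integrable lborel {0..x} g0 \<and> v0 x = v0 0 + (LINT t:{0..x}|lborel. g0 t)"
    using H0 unfolding H1_deriv_halfline_def by blast
  have iNv: "set_integrable lborel {0<..} (\<lambda>x. (cmod (v x))\<^sup>2)" unfolding nv using iN by simp
  have iDg: "set_integrable lborel {0<..} (\<lambda>x. (cmod (g x))\<^sup>2)" unfolding ng using iD by simp
  have iNk: "set_integrable lborel {0<..} (\<lambda>x. \<mu> * ((cmod (v0 x))\<^sup>2 * k))" using iN by simp
  have iLm: "set_integrable lborel {0<..} (\<lambda>x. \<mu> * ((cmod (v0 x))\<^sup>2 * ln ((cmod (v0 x))\<^sup>2)))" using iL by simp
  have iLv: "set_integrable lborel {0<..} (\<lambda>x. (cmod (v x))\<^sup>2 * ln ((cmod (v x))\<^sup>2))"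
    unfolding nl by (rule set_integral_add(1)[OF iNk iLm])
  have gm: "set_borel_measurable lborel {0<..} g"
  proof -
    have "(\<lambda>x. indicator {0<..} x *\<^sub>R g x) = (\<lambda>x. c * (indicator {0<..} x *\<^sub>R g0 x))"
      by (auto simp: g_def indicator_def)
    moreover have "(\<lambda>x. c * (indicator {0<..} x *\<^sub>R g0 x)) \<in> borel_measurable lborel"
      by (rule borel_measurable_times[OF _ gm0]) simp
    ultimately show ?thesis unfolding set_borel_measurable_def by simp
  qed
  have ftc: "set_integrable lborel {0..x} g \<and> v x = v 0 + (LINT t:{0..x}|lborel. g t)" if x: "x \<ge> 0" for x
  proof -
    have "set_integrable lborel {0..x} g0" "v0 x = v0 0 + (LINT t:{0..x}|lborel. g0 t)" using ftc0[OF x] by auto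
    then show ?thesis unfolding v_def g_def by (simp add: algebra_simps)
  qed
  have W: "in_W_halfline v g"
    unfolding in_W_halfline_def H1_deriv_halfline_def using iNv iDg iLv gm ftc by blast
  have Nv: "L2sq_halfline v = \<mu> * N0" unfolding L2sq_halfline_def nv N0_def by simp
  have Dg: "L2sq_halfline g = \<mu> * D0" unfolding L2sq_halfline_def ng D0_def by simp
  have Lv: "logterm_halfline v = \<mu> * (N0 * k) + \<mu> * L0"
    unfolding logterm_halfline_def nl L0_def N0_def L2sq_halfline_def
    by (simp add: set_integral_add(2)[OF iNk iLm] set_integral_mult_left)
  have kN: "N0 * k = D0 + \<omega> * N0 - L0" unfolding k_def using N0p N0_def by simp
  have I0: "I_halfline v g \<omega> = 0"
    unfolding I_halfline_def Nv Dg Lv kN by (simp add: algebra_simps)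
  have "v 0 \<noteq> 0" unfolding v_def c_def using v00 by simp
  then show ?thesis using W I0 by blast
qed


theorem lemma5p2:
  fixes \<omega> :: real
  shows "\<exists>(\<phi> :: nat \<Rightarrow> real \<Rightarrow> complex) (g :: nat \<Rightarrow> real \<Rightarrow> complex).
           (\<forall>n. in_W_halfline (\<phi> n) (g n) \<and> \<phi> n 0 = 0) \<and>
           (\<lambda>n. L2sq_halfline (\<phi> n)) \<longlonglongrightarrow> 4 * d_halfline \<omega> \<and>
           (\<lambda>n. I_halfline (\<phi> n) (g n) \<omega>) \<longlonglongrightarrow> 0"
proof -
  define X where "X = {S_halfline v g \<omega> | v g. in_W_halfline v g \<and> (\<exists>x\<ge>0. v x \<noteq> 0) \<and> I_halfline v g \<omega> = 0}"
  have dX: "d_halfline \<omega> = Inf X" unfolding d_halfline_def X_def ..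
  define d where "d = Inf X"
  have SN: "S_halfline v g \<omega> = I_halfline v g \<omega> / 2 + L2sq_halfline v / 2" for v g
    unfolding S_halfline_def I_halfline_def by (simp add: field_simps)
  have Nnn: "L2sq_halfline v \<ge> 0" for v
    unfolding L2sq_halfline_def by (rule si_nonneg) simp
  have ne: "X \<noteq> {}" using witness[of \<omega>] unfolding X_def by blast
  have bdd: "bdd_below X"
    unfolding bdd_below_def X_def using SN Nnn by (intro exI[of _ 0]) force
  have step: "\<exists>\<phi> \<psi>. (in_W_halfline \<phi> \<psi> \<and> \<phi> 0 = 0) \<and>
      \<bar>L2sq_halfline \<phi> - 4 * d\<bar> < 5 * inverse (real (Suc n)) \<and> \<bar>I_halfline \<phi> \<psi> \<omega>\<bar> < inverse (real (Suc n))" for n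
  proof -
    define \<epsilon> where "\<epsilon> = inverse (real (Suc n))"
    have e: "\<epsilon> > 0" by (simp add: \<epsilon>_def)
    obtain s where s: "s \<in> X" "s < d + \<epsilon>" using cInf_lessD[OF ne, of "d + \<epsilon>"] e d_def by auto
    have ds: "d \<le> s" unfolding d_def by (rule cInf_lower[OF s(1) bdd])
    obtain v g where vg: "s = S_halfline v g \<omega>" "in_W_halfline v g" "I_halfline v g \<omega> = 0"
      using s(1) unfolding X_def by blast
    obtain \<phi> \<psi> where p: "in_W_halfline \<phi> \<psi>" "\<phi> 0 = 0" "\<bar>L2sq_halfline \<phi> - 2 * L2sq_halfline v\<bar> < \<epsilon>"
      "\<bar>I_halfline \<phi> \<psi> \<omega> - 2 * I_halfline v g \<omega>\<bar> < \<epsilon>"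
      using doubling[OF vg(2) e, of \<omega>] by blast
    have "2 * L2sq_halfline v = 4 * s" using vg SN by simp
    then have "\<bar>L2sq_halfline \<phi> - 4 * d\<bar> < 5 * \<epsilon>" using p(3) s(2) ds by linarith
    moreover have "\<bar>I_halfline \<phi> \<psi> \<omega>\<bar> < \<epsilon>" using p(4) vg(3) by simp
    ultimately show ?thesis using p(1,2) unfolding \<epsilon>_def by blast
  qed
  have "\<exists>\<Phi>. \<forall>n. \<exists>\<psi>. (in_W_halfline (\<Phi> n) \<psi> \<and> \<Phi> n 0 = 0) \<and>
      \<bar>L2sq_halfline (\<Phi> n) - 4 * d\<bar> < 5 * inverse (real (Suc n)) \<and> \<bar>I_halfline (\<Phi> n) \<psi> \<omega>\<bar> < inverse (real (Suc n))"
    by (rule choice, rule allI, rule step)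
  then obtain \<Phi> where "\<forall>n. \<exists>\<psi>. (in_W_halfline (\<Phi> n) \<psi> \<and> \<Phi> n 0 = 0) \<and>
      \<bar>L2sq_halfline (\<Phi> n) - 4 * d\<bar> < 5 * inverse (real (Suc n)) \<and> \<bar>I_halfline (\<Phi> n) \<psi> \<omega>\<bar> < inverse (real (Suc n))" by blast
  then have "\<exists>\<Psi>. \<forall>n. (in_W_halfline (\<Phi> n) (\<Psi> n) \<and> \<Phi> n 0 = 0) \<and>
      \<bar>L2sq_halfline (\<Phi> n) - 4 * d\<bar> < 5 * inverse (real (Suc n)) \<and> \<bar>I_halfline (\<Phi> n) (\<Psi> n) \<omega>\<bar> < inverse (real (Suc n))"
    by (rule choice)
  then obtain \<Psi> where P: "\<And>n. (in_W_halfline (\<Phi> n) (\<Psi> n) \<and> \<Phi> n 0 = 0) \<and>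
      \<bar>L2sq_halfline (\<Phi> n) - 4 * d\<bar> < 5 * inverse (real (Suc n)) \<and> \<bar>I_halfline (\<Phi> n) (\<Psi> n) \<omega>\<bar> < inverse (real (Suc n))" by blast
  have B: "4 * d - 5 * inverse (real (Suc n)) \<le> L2sq_halfline (\<Phi> n) \<and> L2sq_halfline (\<Phi> n) \<le> 4 * d + 5 * inverse (real (Suc n))
     \<and> - inverse (real (Suc n)) \<le> I_halfline (\<Phi> n) (\<Psi> n) \<omega> \<and> I_halfline (\<Phi> n) (\<Psi> n) \<omega> \<le> inverse (real (Suc n))" for n
    using P[of n] by (auto simp: abs_less_iff)
  have z: "(\<lambda>n. inverse (real (Suc n))) \<longlonglongrightarrow> 0" by (rule LIMSEQ_inverse_real_of_nat)
  have l1: "(\<lambda>n. L2sq_halfline (\<Phi> n)) \<longlonglongrightarrow> 4 * d"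
  proof (rule tendsto_sandwich[of "\<lambda>n. 4 * d - 5 * inverse (real (Suc n))" _ _ "\<lambda>n. 4 * d + 5 * inverse (real (Suc n))"])
    show "\<forall>\<^sub>F n in sequentially. 4 * d - 5 * inverse (real (Suc n)) \<le> L2sq_halfline (\<Phi> n)"
      using B by (intro always_eventually allI) blast
    show "\<forall>\<^sub>F n in sequentially. L2sq_halfline (\<Phi> n) \<le> 4 * d + 5 * inverse (real (Suc n))"
      using B by (intro always_eventually allI) blast
    show "(\<lambda>n. 4 * d - 5 * inverse (real (Suc n))) \<longlonglongrightarrow> 4 * d" using tendsto_diff[OF tendsto_const tendsto_mult[OF tendsto_const z], of "4*d" 5] by simp
    show "(\<lambda>n. 4 * d + 5 * inverse (real (Suc n))) \<longlonglongrightarrow> 4 * d" using tendsto_add[OF tendsto_const tendsto_mult[OF tendsto_const z], of "4*d" 5] by simp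
  qed
  have l2: "(\<lambda>n. I_halfline (\<Phi> n) (\<Psi> n) \<omega>) \<longlonglongrightarrow> 0"
  proof (rule tendsto_sandwich[of "\<lambda>n. - inverse (real (Suc n))" _ _ "\<lambda>n. inverse (real (Suc n))"])
    show "\<forall>\<^sub>F n in sequentially. - inverse (real (Suc n)) \<le> I_halfline (\<Phi> n) (\<Psi> n) \<omega>"
      using B by (intro always_eventually allI) blast
    show "\<forall>\<^sub>F n in sequentially. I_halfline (\<Phi> n) (\<Psi> n) \<omega> \<le> inverse (real (Suc n))"
      using B by (intro always_eventually allI) blast
    show "(\<lambda>n. - inverse (real (Suc n))) \<longlonglongrightarrow> 0" using tendsto_minus[OF z] by simp
    show "(\<lambda>n. inverse (real (Suc n))) \<longlonglongrightarrow> 0" by (rule z)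
  qed
  show ?thesis
    using P l1 l2 unfolding dX d_def[symmetric] by blast
qed

end
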